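(* Let $(N,+,* )$ be a planar nearring, presented by $(\Phi,R,M)$ as in the context. If $d\in D(N)$, then $d\Phi^*=d\Phi\cup\{0\}$ is closed under addition.
   Context: A (right) nearring $(N,+,* )$ is a set with a group $(N,+)$ (identity $0$, not necessarily abelian), a semigroup $(N,* )$, and right distributivity $(a+b)*c=a*c+b*c$ for all $a,b,c$. Elements $a,b$ are equivalent multipliers, $a\cong b$, if $x*a=x*b$ for all $x\in N$. $N$ is planar if $\cong$ has at least $3$ classes and for all $a,b,c\in N$ with $a\not\cong b$ the equation $x*a=x*b+c$ has a unique solution $x\in N$. Every planar nearring arises as follows, and we always consider it so presented. $\Phi\le \mathrm{Aut}(N,+)$ is a group of automorphisms acting on the right ($n\mapsto n\phi$), fixed point free (for $\phi\ne\mathrm{id}$, $n\phi=n$ iff $n=0$), and such that $n\mapsto -n+n\phi$ is bijective for every $\phi\ne \mathrm{id}$. $R$ is a set of representatives of the $\Phi$-orbits of $N\setminus\{0\}$ and $M\subseteq R$. Each $a\ne 0$ is uniquely $a=r_a\phi_a$ with $r_a\in R$, $\phi_a\in\Phi$. The multiplication is $a*b=0$ if $b=0$ or $r_b\in M$, and $a*b=a\phi_b$ otherwise (with $0*b=0$). For $a\in N$, $a\Phi$ is its orbit and $a\Phi^*=a\Phi\cup\{0\}$. The zero multipliers are the elements of $M\Phi\cup\{0\}$; equivalently $n$ is a zero multiplier iff $x*n=0$ for all $x\in N$. $D(N)=\{n\in N: n*(a+b)=n*a+n*b \text{ for all } a,b\in N\}$ is the set of distributive elements. $Z(\Phi)$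 is the centre of $\Phi$. *)

theory Defs
  imports Main
begin

text \<open>The additive group (N,+) is the whole type 'a (class group_add, not necessarily
abelian). Automorphisms act on the right: n phi is written as function application phi n.\<close>

definition is_aut :: "('a::group_add \<Rightarrow> 'a) \<Rightarrow> bool" where
  "is_aut f \<longleftrightarrow> bij f \<and> (\<forall>a b. f (a + b) = f a + f b)"

definition orbit :: "('a \<Rightarrow> 'a) set \<Rightarrow> 'a \<Rightarrow> 'a set" where
  "orbit \<Phi> a = (\<lambda>\<phi>. \<phi> a) ` \<Phi>"

definition orbit0 :: "('a::group_add \<Rightarrow> 'a) set \<Rightarrow> 'a \<Rightarrow> 'a set" where
  "orbit0 \<Phi> a = insert 0 (orbit \<Phi> a)"

text \<open>Data (Phi, R, M) of a planar nearring presentation (Ferrero construction).\<close>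
definition presentation ::
  "('a::group_add \<Rightarrow> 'a) set \<Rightarrow> 'a set \<Rightarrow> 'a set \<Rightarrow> bool" where
  "presentation \<Phi> R M \<longleftrightarrow>
     (\<forall>\<phi>\<in>\<Phi>. is_aut \<phi>) \<and> id \<in> \<Phi> \<and>
     (\<forall>\<phi>\<in>\<Phi>. \<forall>\<psi>\<in>\<Phi>. \<psi> \<circ> \<phi> \<in> \<Phi>) \<and> (\<forall>\<phi>\<in>\<Phi>. inv \<phi> \<in> \<Phi>) \<and>
     (\<forall>\<phi>\<in>\<Phi>. \<phi> \<noteq> id \<longrightarrow> (\<forall>n. \<phi> n = n \<longleftrightarrow> n = 0)) \<and>
     (\<forall>\<phi>\<in>\<Phi>. \<phi> \<noteq> id \<longrightarrow> bij (\<lambda>n. - n + \<phi> n)) \<and>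
     R \<subseteq> - {0} \<and>
     (\<forall>a. a \<noteq> 0 \<longrightarrow> (\<exists>!r. r \<in> R \<and> a \<in> orbit \<Phi> r)) \<and>
     M \<subseteq> R"

definition rep :: "('a \<Rightarrow> 'a) set \<Rightarrow> 'a set \<Rightarrow> 'a \<Rightarrow> 'a" where
  "rep \<Phi> R a = (THE r. r \<in> R \<and> a \<in> orbit \<Phi> r)"

definition phi_of :: "('a \<Rightarrow> 'a) set \<Rightarrow> 'a set \<Rightarrow> 'a \<Rightarrow> ('a \<Rightarrow> 'a)" where
  "phi_of \<Phi> R a = (THE \<phi>. \<phi> \<in> \<Phi> \<and> a = \<phi> (rep \<Phi> R a))"

definition nr_mult ::
  "('a::group_add \<Rightarrow> 'a) set \<Rightarrow> 'a set \<Rightarrow> 'a set \<Rightarrow> 'a \<Rightarrow> 'a \<Rightarrow> 'a" where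
  "nr_mult \<Phi> R M a b =
     (if b = 0 \<or> rep \<Phi> R b \<in> M then 0 else phi_of \<Phi> R b a)"

definition equiv_mult :: "('a \<Rightarrow> 'a \<Rightarrow> 'a) \<Rightarrow> 'a \<Rightarrow> 'a \<Rightarrow> bool" where
  "equiv_mult mult a b \<longleftrightarrow> (\<forall>x. mult x a = mult x b)"

definition planar :: "('a::group_add \<Rightarrow> 'a \<Rightarrow> 'a) \<Rightarrow> bool" where
  "planar mult \<longleftrightarrow>
     (\<exists>a b c. \<not> equiv_mult mult a b \<and> \<not> equiv_mult mult a c \<and> \<not> equiv_mult mult b c) \<and>
     (\<forall>a b c. \<not> equiv_mult mult a b \<longrightarrow> (\<exists>!x. mult x a = mult x b + c))"

definition distributive_elems :: "('a::group_add \<Rightarrow> 'a \<Rightarrow> 'a) \<Rightarrow> 'a set" where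
  "distributive_elems mult = {n. \<forall>a b. mult n (a + b) = mult n a + mult n b}"

end

theory Submission
  imports Defs
begin

lemma aut_zero: assumes "is_aut f" shows "f 0 = 0"
proof -
  have "f (0 + 0) = f 0 + f 0" using assms unfolding is_aut_def by blast
  hence "f 0 + f 0 = f 0 + 0" by simp
  thus ?thesis by (rule add_left_imp_eq)
qed

lemma aut_nz: assumes "is_aut f" "r \<noteq> 0" shows "f r \<noteq> 0"
proof
  assume "f r = 0"
  hence "f r = f 0" using aut_zero[OF assms(1)] by simp
  moreover have "inj f" using assms(1) unfolding is_aut_def by (simp add: bij_is_inj)
  ultimately show False using assms(2) by (simp add: inj_eq)
qed

lemma pres_D:
  assumes "presentation \<Phi> R M"
  shows pres_aut: "\<And>\<phi>. \<phi> \<in> \<Phi> \<Longrightarrow> is_aut \<phi>"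
    and pres_comp: "\<And>\<phi> \<psi>. \<phi> \<in> \<Phi> \<Longrightarrow> \<psi> \<in> \<Phi> \<Longrightarrow> \<psi> \<circ> \<phi> \<in> \<Phi>"
    and pres_inv: "\<And>\<phi>. \<phi> \<in> \<Phi> \<Longrightarrow> inv \<phi> \<in> \<Phi>"
    and pres_fpf: "\<And>\<phi> n. \<phi> \<in> \<Phi> \<Longrightarrow> \<phi> \<noteq> id \<Longrightarrow> \<phi> n = n \<Longrightarrow> n = 0"
    and pres_R: "\<And>r. r \<in> R \<Longrightarrow> r \<noteq> 0"
    and pres_ex: "\<And>a. a \<noteq> 0 \<Longrightarrow> \<exists>!r. r \<in> R \<and> a \<in> orbit \<Phi> r"
  using assms unfolding presentation_def by auto

lemma phi_uniq:
  assumes P: "presentation \<Phi> R M" and "\<phi> \<in> \<Phi>" "\<psi> \<in> \<Phi>" "r \<noteq> 0" "\<phi> r = \<psi> r"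
  shows "\<phi> = \<psi>"
proof -
  have bij: "bij \<psi>" using pres_aut[OF P assms(3)] unfolding is_aut_def by blast
  have c: "inv \<psi> \<circ> \<phi> \<in> \<Phi>" using pres_comp[OF P assms(2) pres_inv[OF P assms(3)]] .
  have "(inv \<psi> \<circ> \<phi>) r = r" using assms(5) bij by (simp add: bij_is_inj)
  hence "inv \<psi> \<circ> \<phi> = id" using pres_fpf[OF P c] assms(4) by blast
  hence "\<psi> \<circ> (inv \<psi> \<circ> \<phi>) = \<psi>" by simp
  moreover have "\<psi> \<circ> (inv \<psi> \<circ> \<phi>) = \<phi>"
    using bij by (auto simp: fun_eq_iff bij_is_surj surj_f_inv_f)
  ultimately show ?thesis by simp
qed

lemma rep_props:
  assumes P: "presentation \<Phi> R M" and "a \<noteq> 0"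
  shows "rep \<Phi> R a \<in> R \<and> a \<in> orbit \<Phi> (rep \<Phi> R a)"
proof -
  have "\<exists>!r. r \<in> R \<and> a \<in> orbit \<Phi> r" using pres_ex[OF P assms(2)] .
  thus ?thesis unfolding rep_def by (rule theI')
qed

lemma rep_eq:
  assumes P: "presentation \<Phi> R M" and "a \<noteq> 0" "r \<in> R" "a \<in> orbit \<Phi> r"
  shows "rep \<Phi> R a = r"
proof -
  have "\<exists>!r. r \<in> R \<and> a \<in> orbit \<Phi> r" using pres_ex[OF P assms(2)] .
  thus ?thesis unfolding rep_def using assms(3,4) by (simp add: the1_equality)
qed

lemma phi_of_props:
  assumes P: "presentation \<Phi> R M" and "a \<noteq> 0"
  shows "phi_of \<Phi> R a \<in> \<Phi> \<and> a = phi_of \<Phi> R a (rep \<Phi> R a)"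
proof -
  have r: "rep \<Phi> R a \<in> R" "a \<in> orbit \<Phi> (rep \<Phi> R a)" using rep_props[OF assms] by auto
  have nz: "rep \<Phi> R a \<noteq> 0" using pres_R[OF P r(1)] .
  have "\<exists>!\<phi>. \<phi> \<in> \<Phi> \<and> a = \<phi> (rep \<Phi> R a)"
  proof -
    obtain \<phi> where "\<phi> \<in> \<Phi>" "a = \<phi> (rep \<Phi> R a)" using r(2) unfolding orbit_def by blast
    moreover have "\<psi> = \<phi>" if "\<psi> \<in> \<Phi> \<and> a = \<psi> (rep \<Phi> R a)" for \<psi>
      using phi_uniq[OF P _ _ nz, of \<psi> \<phi>] that calculation by simp
    ultimately show ?thesis by blast
  qed
  thus ?thesis unfolding phi_of_def by (rule theI')
qed

lemma phi_of_eq: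
  assumes P: "presentation \<Phi> R M" and "r \<in> R" "\<phi> \<in> \<Phi>"
  shows "phi_of \<Phi> R (\<phi> r) = \<phi>" "rep \<Phi> R (\<phi> r) = r"
proof -
  have nz: "r \<noteq> 0" using pres_R[OF P assms(2)] .
  have aut: "is_aut \<phi>" using pres_aut[OF P assms(3)] .
  have "\<phi> r \<noteq> 0" using aut nz by (rule aut_nz)
  moreover have "\<phi> r \<in> orbit \<Phi> r" using assms(3) unfolding orbit_def by blast
  ultimately show rr: "rep \<Phi> R (\<phi> r) = r" using rep_eq[OF P _ assms(2)] by blast
  have "phi_of \<Phi> R (\<phi> r) \<in> \<Phi> \<and> \<phi> r = phi_of \<Phi> R (\<phi> r) r"
    using phi_of_props[OF P \<open>\<phi> r \<noteq> 0\<close>] rr by simp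
  thus "phi_of \<Phi> R (\<phi> r) = \<phi>" using phi_uniq[OF P _ assms(3) nz, of "phi_of \<Phi> R (\<phi> r)"] by simp
qed

lemma mult_in_orbit0:
  assumes P: "presentation \<Phi> R M"
  shows "nr_mult \<Phi> R M d b \<in> orbit0 \<Phi> d"
  using phi_of_props[OF P] unfolding nr_mult_def orbit0_def orbit_def by auto

theorem mainTheorem1:
  fixes \<Phi> :: "('a::group_add \<Rightarrow> 'a) set" and R M :: "'a set" and d :: 'a
  assumes "presentation \<Phi> R M"
    and "planar (nr_mult \<Phi> R M)"
    and "d \<in> distributive_elems (nr_mult \<Phi> R M)"
  shows "\<forall>x\<in>orbit0 \<Phi> d. \<forall>y\<in>orbit0 \<Phi> d. x + y \<in> orbit0 \<Phi> d"
proof -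
  note P = assms(1)
  obtain r where r: "r \<in> R" "r \<notin> M"
  proof (rule ccontr)
    assume "\<not> thesis"
    have allz: "nr_mult \<Phi> R M x b = 0" for x b
    proof (cases "b = 0")
      case False
      have "rep \<Phi> R b \<in> R" using rep_props[OF P False] by blast
      hence "rep \<Phi> R b \<in> M" using that \<open>\<not> thesis\<close> by blast
      thus ?thesis unfolding nr_mult_def by simp
    qed (simp add: nr_mult_def)
    thus False using assms(2) unfolding planar_def equiv_mult_def by simp
  qed
  show ?thesis
  proof (intro ballI)
    fix x y assume x: "x \<in> orbit0 \<Phi> d" and y: "y \<in> orbit0 \<Phi> d"
    show "x + y \<in> orbit0 \<Phi> d"
    proof (cases "x = 0 \<or> y = 0")
      case True thus ?thesis using x y by auto
    next
      case False
      then obtain \<phi> \<psi> where ph: "\<phi> \<in> \<Phi>" "x = \<phi> d" and ps: "\<psi> \<in> \<Phi>" "y = \<psi> d"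
        using x y unfolding orbit0_def orbit_def by auto
      have nz: "r \<noteq> 0" using pres_R[OF P r(1)] .
      have aut: "\<And>f. f \<in> \<Phi> \<Longrightarrow> f r \<noteq> 0"
      proof -
        fix f assume f: "f \<in> \<Phi>"
        have aut: "is_aut f" using pres_aut[OF P f] .
        show "f r \<noteq> 0" using aut nz by (rule aut_nz)
      qed
      have m1: "nr_mult \<Phi> R M d (\<phi> r) = x"
        using phi_of_eq[OF P r(1) ph(1)] aut[OF ph(1)] r(2) ph(2) unfolding nr_mult_def by simp
      have m2: "nr_mult \<Phi> R M d (\<psi> r) = y"
        using phi_of_eq[OF P r(1) ps(1)] aut[OF ps(1)] r(2) ps(2) unfolding nr_mult_def by simp
      have "nr_mult \<Phi> R M d (\<phi> r + \<psi> r) = x + y"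
        using assms(3) m1 m2 unfolding distributive_elems_def by simp
      thus ?thesis using mult_in_orbit0[OF P, of d "\<phi> r + \<psi> r"] by simp
    qed
  qed
qed

end
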